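(* Let $d\ge 2$. For each rank-one projector $\Pi$ on $\mathbb{C}^d$ define the map $\Phi_\Pi:{\cal L}(\mathbb{C}^d)\to{\cal L}(\mathbb{C}^d)$ by $\Phi_\Pi(X)=\Pi X\Pi$, and let $\Phi(X)=\frac{1}{d(d+1)}\big(({\rm tr}\,X)I+X\big)$. Suppose $\Phi=\sum_{i=1}^{n}\pi_i\Phi_{\Pi_i}$ for some $n\le d^2$, rank-one projectors $\Pi_1,\dots,\Pi_n$, and weights $\pi_i>0$ with $\sum_i\pi_i=1$. Then $n=d^2$, $\pi_i=\frac{1}{d^2}$ for all $i$, and ${\rm tr}(\Pi_i\Pi_j)=\frac{1}{d+1}$ for all $i\ne j$; that is, the $\Pi_i$ with weights $1/d^2$ form a SIC ensemble.
   Context: ${\cal L}(\mathbb{C}^d)$ is the space of linear operators on $\mathbb{C}^d$; $I$ is the identity. *)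

theory Defs
  imports "HOL-Analysis.Analysis"
begin

text \<open>Operators on C^d are represented as d x d complex matrices, with d = CARD('d).\<close>

definition adjoint_mat :: "complex^'d^'d \<Rightarrow> complex^'d^'d" where
  "adjoint_mat A = (\<chi> i j. cnj (A $ j $ i))"

definition rank_one_projector :: "complex^'d^'d \<Rightarrow> bool" where
  "rank_one_projector P \<longleftrightarrow> adjoint_mat P = P \<and> P ** P = P \<and> rank P = 1"

definition Phi_proj :: "complex^'d^'d \<Rightarrow> complex^'d^'d \<Rightarrow> complex^'d^'d" where
  "Phi_proj P X = P ** X ** P"

definition Phi :: "complex^'d^'d \<Rightarrow> complex^'d^'d" where
  "Phi X = (1 / (real CARD('d) * (real CARD('d) + 1))) *\<^sub>R (mat (trace X) + X)"

end

theory Submission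
  imports Defs
begin


lemma rank1_outer:
  fixes P :: "complex^'d^'d"
  assumes "rank P = 1"
  shows "\<exists>a u. \<forall>i j. P$i$j = a$i * u$j"
proof -
  obtain B where B: "B \<subseteq> rows P" "vec.independent B" "rows P \<subseteq> vec.span B" "card B = vec.dim (rows P)"
    using vec.basis_exists by blast
  then have "card B = 1" using assms by (simp add: row_rank_def_gen)
  then obtain u where u: "B = {u}" using card_1_singletonE by blast
  have "\<forall>i. \<exists>k. row i P = k *s u"
  proof
    fix i
    have "row i P \<in> rows P" by (auto simp: rows_def)
    then have "row i P \<in> vec.span {u}" using B u by auto
    then show "\<exists>k. row i P = k *s u" by (auto simp: vec.span_singleton)
  qed
  then obtain a where a: "\<And>i. row i P = a i *s u" by metis
  show ?thesis
  proof (intro exI allI)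
    fix i j
    have "P$i$j = row i P $ j" by (simp add: row_def)
    also have "\<dots> = (\<chi> i. a i) $ i * u $ j" using a by simp
    finally show "P$i$j = (\<chi> i. a i) $ i * u $ j" .
  qed
qed

lemma sandwich:
  fixes P X :: "complex^'d^'d"
  assumes "\<And>i j. P$i$j = a$i * u$j"
  shows "P ** X ** P = (\<chi> i j. trace (P ** X) * P$i$j)"
proof -
  have "(P ** X ** P)$i$j = trace (P ** X) * P$i$j" for i j
  proof -
    have "(P ** X ** P)$i$j = (\<Sum>l\<in>UNIV. (\<Sum>k\<in>UNIV. a$i * u$k * X$k$l) * (a$l * u$j))"
      by (simp add: matrix_matrix_mult_def assms)
    also have "\<dots> = (\<Sum>l\<in>UNIV. \<Sum>k\<in>UNIV. (u$k * X$k$l * a$l) * (a$i * u$j))"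
      by (simp add: sum_distrib_left sum_distrib_right mult_ac)
    also have "\<dots> = (\<Sum>k\<in>UNIV. \<Sum>l\<in>UNIV. (u$k * X$k$l * a$l)) * (a$i * u$j)"
      by (subst sum.swap) (simp add: sum_distrib_right)
    also have "trace (P ** X) = (\<Sum>l\<in>UNIV. \<Sum>k\<in>UNIV. a$l * u$k * X$k$l)"
      by (simp add: trace_def matrix_matrix_mult_def assms)
    ultimately show ?thesis
      by (simp add: assms mult_ac sum_distrib_left) (subst sum.swap, simp add: mult_ac)
  qed
  then show ?thesis by (simp add: vec_eq_iff)
qed



lemma real_part:
  fixes d :: real and w :: "nat \<Rightarrow> real" and g :: "nat \<Rightarrow> nat \<Rightarrow> real"
  assumes d: "d > 0" and nle: "real n \<le> d^2" and wpos: "\<forall>i<n. w i > 0" and wsum: "(\<Sum>i<n. w i) = 1"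
    and gd: "\<forall>j<n. g j j = 1"
    and A: "\<forall>j<n. (\<Sum>i<n. w i * g j i) = 1/d"
    and B: "\<forall>j<n. (\<Sum>i<n. w i * (g j i)^2) = 2/(d*(d+1))"
  shows "real n = d^2 \<and> (\<forall>i<n. w i = 1/d^2) \<and> (\<forall>j<n. \<forall>i<n. i \<noteq> j \<longrightarrow> g j i = 1/(d+1))"
proof -
  define c where "c = 1/(d+1)"
  have S: "(\<Sum>i<n. w i * (g j i - c)^2) = 1/(d+1)^2" if j: "j<n" for j
  proof -
    have "(\<Sum>i<n. w i * (g j i - c)^2) = (\<Sum>i<n. w i * (g j i)^2) - 2*c*(\<Sum>i<n. w i * g j i) + c^2 * (\<Sum>i<n. w i)"
      by (simp add: power2_diff sum.distrib sum_subtractf sum_distrib_left sum_distrib_right algebra_simps)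
    also have "\<dots> = 2/(d*(d+1)) - 2*c/d + c^2" using A B wsum j by simp
    also have "\<dots> = 1/(d+1)^2" using d by (simp add: c_def field_simps power2_eq_square)
    finally show ?thesis .
  qed
  have R: "w j * (d/(d+1))^2 + (\<Sum>i\<in>{..<n}-{j}. w i * (g j i - c)^2) = 1/(d+1)^2" if j: "j<n" for j
  proof -
    have "(\<Sum>i<n. w i * (g j i - c)^2) = w j * (g j j - c)^2 + (\<Sum>i\<in>{..<n}-{j}. w i * (g j i - c)^2)"
      using j by (subst sum.remove[of _ j]) auto
    moreover have "(g j j - c) = d/(d+1)" using gd j d by (simp add: c_def field_simps)
    ultimately show ?thesis using S[OF j] by simp
  qed
  have Rnn: "(\<Sum>i\<in>{..<n}-{j}. w i * (g j i - c)^2) \<ge> 0" if "j<n" for j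
    using wpos by (intro sum_nonneg) (simp add: less_imp_le)
  have wle: "w j \<le> 1/d^2" if j: "j<n" for j
  proof -
    have "w j * (d/(d+1))^2 \<le> 1/(d+1)^2" using R[OF j] Rnn[OF j] by linarith
    then have "w j * d^2 \<le> 1" using d by (simp add: field_simps power_divide)
    then show ?thesis using d by (simp add: field_simps)
  qed
  have "(\<Sum>i<n. w i) \<le> (\<Sum>i<n. 1/d^2)" using wle by (intro sum_mono) auto
  then have "1 \<le> (\<Sum>i<n. 1/d^2)" using wsum by simp
  then have "1 \<le> real n / d^2" by simp
  then have "d^2 \<le> real n" using d by (simp add: field_simps)
  then have neq: "real n = d^2" using nle by simp
  have "(\<Sum>i<n. 1/d^2 - w i) = 0" using neq wsum d by (simp add: sum_subtractf)
  moreover have "\<forall>i\<in>{..<n}. 1/d^2 - w i \<ge> 0" using wle by auto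
  ultimately have weq: "\<forall>i<n. w i = 1/d^2"
    using sum_nonneg_eq_0_iff[of "{..<n}" "\<lambda>i. 1/d^2 - w i"] by auto
  have geq: "g j i = c" if j: "j<n" and i: "i<n" "i\<noteq>j" for i j
  proof -
    have "w j * (d/(d+1))^2 = 1/(d+1)^2" using weq j d by (simp add: field_simps power_divide)
    then have "(\<Sum>i\<in>{..<n}-{j}. w i * (g j i - c)^2) = 0" using R[OF j] by linarith
    moreover have "\<forall>i\<in>{..<n}-{j}. w i * (g j i - c)^2 \<ge> 0" using wpos by (simp add: less_imp_le)
    ultimately have "w i * (g j i - c)^2 = 0"
      using sum_nonneg_eq_0_iff[of "{..<n}-{j}" "\<lambda>i. w i * (g j i - c)^2"] i by auto
    then show ?thesis using wpos i by force
  qed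
  show ?thesis using neq weq geq c_def by auto
qed


lemma scaleR_cplx: "(r::real) *\<^sub>R (z::complex) = of_real r * z"
  by (simp add: scaleR_conv_of_real)

lemma scaleR_entry: "((r::real) *\<^sub>R (M::complex^'d^'d))$k$i = of_real r * M$k$i"
  by (simp add: scaleR_cplx)

lemma trace_sum_scaleR:
  fixes A :: "complex^'d^'d" and n :: nat
  shows "trace (A ** (\<Sum>i<n. w i *\<^sub>R M i)) = (\<Sum>i<n. of_real (w i) * trace (A ** M i))"
proof (induction n)
  case 0
  then show ?case by (simp add: trace_def matrix_matrix_mult_def)
next
  case (Suc n)
  have "trace (A ** (r *\<^sub>R M)) = of_real r * trace (A ** M)" for r and M :: "complex^'d^'d"
    by (simp add: trace_def matrix_matrix_mult_def sum_distrib_left scaleR_entry scaleR_cplx mult_ac)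
  then show ?case using Suc by (simp add: matrix_add_ldistrib trace_add)
qed

lemma trace_mat_right:
  fixes A :: "complex^'d^'d"
  shows "trace (A ** mat t) = t * trace A"
  by (simp add: trace_def matrix_matrix_mult_def mat_def sum_distrib_left mult_ac if_distrib cong: if_cong)

lemma trace_chi_scale:
  fixes A B :: "complex^'d^'d"
  shows "trace (A ** (\<chi> a b. t * B$a$b)) = t * trace (A ** B)"
  by (simp add: trace_def matrix_matrix_mult_def sum_distrib_left mult_ac)

lemma trace_Phi:
  fixes A X :: "complex^'d^'d"
  shows "trace (A ** Phi X) = of_real (1 / (real CARD('d) * (real CARD('d) + 1))) * (trace X * trace A + trace (A ** X))"
proof -
  have "trace (A ** (r *\<^sub>R M)) = of_real r * trace (A ** M)" for r and M :: "complex^'d^'d"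
    by (simp add: trace_def matrix_matrix_mult_def sum_distrib_left scaleR_entry scaleR_cplx mult_ac)
  then show ?thesis unfolding Phi_def by (simp add: matrix_add_ldistrib trace_add trace_mat_right)
qed

lemma trace_herm_real:
  fixes A B :: "complex^'d^'d"
  assumes "adjoint_mat A = A" "adjoint_mat B = B"
  shows "trace (A ** B) = of_real (Re (trace (A ** B)))"
proof -
  have a: "cnj (A$k$l) = A$l$k" for k l using assms(1) by (metis adjoint_mat_def vec_lambda_beta)
  have b: "cnj (B$k$l) = B$l$k" for k l using assms(2) by (metis adjoint_mat_def vec_lambda_beta)
  have "cnj (trace (A ** B)) = (\<Sum>k\<in>UNIV. \<Sum>l\<in>UNIV. A$l$k * B$k$l)"
    by (simp add: trace_def matrix_matrix_mult_def a b)
  also have "\<dots> = trace (A ** B)"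
    by (simp add: trace_def matrix_matrix_mult_def) (subst sum.swap, simp)
  finally show ?thesis by (simp add: complex_eq_iff)
qed

lemma rank1_props:
  fixes P :: "complex^'d^'d"
  assumes "rank_one_projector P"
  shows "P ** P = P" "trace P = 1" "\<And>X. P ** X ** P = (\<chi> i j. trace (P ** X) * P$i$j)"
proof -
  show pp: "P ** P = P" using assms by (simp add: rank_one_projector_def)
  obtain a u where au: "\<forall>i j. P$i$j = a$i * u$j" using rank1_outer assms rank_one_projector_def by blast
  show sw: "\<And>X. P ** X ** P = (\<chi> i j. trace (P ** X) * P$i$j)" using sandwich au by blast
  have "P \<noteq> 0"
  proof
    assume "P = 0"
    then have "rows P \<subseteq> {0}" by (auto simp: rows_def row_def zero_vec_def)
    then have "vec.dim (rows P) = 0"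
      by (simp only: vec.dim_eq_0)
    moreover have "rank P = 1" using assms rank_one_projector_def by blast
    ultimately show False by (metis row_rank_def_gen zero_neq_one)
  qed
  then obtain i j where ij: "P$i$j \<noteq> 0" by (metis vec_eq_iff zero_index)
  have "P = (\<chi> i j. trace P * P$i$j)" using sw[of "mat 1"] pp by simp
  then have "P$i$j = trace P * P$i$j" by (metis vec_lambda_beta)
  then show "trace P = 1" using ij by simp
qed


theorem theorem5:
  fixes P :: "nat \<Rightarrow> complex^'d^'d" and w :: "nat \<Rightarrow> real" and n :: nat
  assumes "CARD('d) \<ge> 2"
    and "n \<le> CARD('d)^2"
    and "\<forall>i<n. rank_one_projector (P i)"
    and "\<forall>i<n. w i > 0"
    and "(\<Sum>i<n. w i) = 1"
    and "\<forall>X. Phi X = (\<Sum>i<n. w i *\<^sub>R Phi_proj (P i) X)"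
  shows "n = CARD('d)^2
    \<and> (\<forall>i<n. w i = 1 / real (CARD('d)^2))
    \<and> (\<forall>i<n. \<forall>j<n. i \<noteq> j \<longrightarrow> trace (P i ** P j) = 1 / (of_nat CARD('d) + 1))"
  proof -
  let ?d = "real CARD('d)"
  define g where "g j i = Re (trace (P j ** P i))" for j i
  have pr: "\<And>i. i<n \<Longrightarrow> rank_one_projector (P i)" using assms(3) by blast
  have herm: "\<And>i. i<n \<Longrightarrow> adjoint_mat (P i) = P i" using pr rank_one_projector_def by blast
  have tg: "trace (P j ** P i) = of_real (g j i)" if "i<n" "j<n" for i j
    using trace_herm_real[OF herm[OF that(2)] herm[OF that(1)]] g_def by simp
  have tg': "trace (P i ** P j) = of_real (g j i)" if "i<n" "j<n" for i j
    using tg[OF that] trace_mul_sym[of "P i" "P j"] by simp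
  have dpos: "?d > 0" by simp
  have cnz: "(of_nat CARD('d)::complex) + of_nat CARD('d) * of_nat CARD('d) \<noteq> 0"
  proof -
    have "(of_nat (CARD('d) + CARD('d) * CARD('d))::complex) \<noteq> 0" by (simp only: of_nat_eq_0_iff) simp
    then show ?thesis by (metis of_nat_add of_nat_mult)
  qed
  have gd: "\<forall>j<n. g j j = 1" using rank1_props(1,2)[OF pr] g_def by simp
  have A: "\<forall>j<n. (\<Sum>i<n. w i * g j i) = 1/?d"
  proof (intro allI impI)
    fix j assume j: "j<n"
    have "trace (P j ** Phi (mat 1)) = (\<Sum>i<n. of_real (w i) * trace (P j ** Phi_proj (P i) (mat 1)))"
      by (simp only: assms(6)[rule_format] trace_sum_scaleR)
    also have "\<dots> = (\<Sum>i<n. of_real (w i * g j i))"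
      by (intro sum.cong refl) (simp add: Phi_proj_def rank1_props(1)[OF pr] tg j)
    finally have "of_real (\<Sum>i<n. w i * g j i) = trace (P j ** Phi (mat 1))" by simp
    also have "\<dots> = of_real (1/?d)"
      using dpos by (simp add: trace_Phi trace_I rank1_props(2)[OF pr[OF j]] cnz field_simps)
    finally show "(\<Sum>i<n. w i * g j i) = 1/?d" using of_real_eq_iff by blast
  qed
  have B: "\<forall>j<n. (\<Sum>i<n. w i * (g j i)^2) = 2/(?d*(?d+1))"
  proof (intro allI impI)
    fix j assume j: "j<n"
    have "trace (P j ** Phi (P j)) = (\<Sum>i<n. of_real (w i) * trace (P j ** Phi_proj (P i) (P j)))"
      by (simp only: assms(6)[rule_format] trace_sum_scaleR)
    also have "\<dots> = (\<Sum>i<n. of_real (w i * (g j i)^2))"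
    proof (intro sum.cong refl)
      fix i assume "i \<in> {..<n}"
      then have i: "i<n" by simp
      show "of_real (w i) * trace (P j ** Phi_proj (P i) (P j)) = of_real (w i * (g j i)^2)"
        by (simp add: Phi_proj_def rank1_props(3)[OF pr[OF i]] trace_chi_scale tg'[OF i j] tg[OF i j] power2_eq_square)
    qed
    finally have "of_real (\<Sum>i<n. w i * (g j i)^2) = trace (P j ** Phi (P j))" by simp
    also have "\<dots> = of_real (2/(?d*(?d+1)))"
      using dpos by (simp add: trace_Phi rank1_props(1,2)[OF pr[OF j]] cnz field_simps)
    finally show "(\<Sum>i<n. w i * (g j i)^2) = 2/(?d*(?d+1))" using of_real_eq_iff by blast
  qed
  have nle: "real n \<le> ?d^2" proof -
    have "real n \<le> real (CARD('d)^2)" using assms(2) by (simp only: of_nat_le_iff)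
    then show ?thesis by simp
  qed
  have R: "real n = ?d^2 \<and> (\<forall>i<n. w i = 1/?d^2) \<and> (\<forall>j<n. \<forall>i<n. i \<noteq> j \<longrightarrow> g j i = 1/(?d+1))"
    using real_part[OF dpos nle assms(4) assms(5) gd A B] .
  have "n = CARD('d)^2" using R of_nat_eq_iff[of n "CARD('d)^2"] by simp
  moreover have "\<forall>i<n. w i = 1 / real (CARD('d)^2)" using R by simp
  moreover have "\<forall>i<n. \<forall>j<n. i \<noteq> j \<longrightarrow> trace (P i ** P j) = 1 / (of_nat CARD('d) + 1)"
  proof (intro allI impI)
    fix i j assume "i<n" "j<n" "i\<noteq>j"
    then have "trace (P i ** P j) = of_real (1/(?d+1))" using R tg' by simp
    then show "trace (P i ** P j) = 1 / (of_nat CARD('d) + 1)" by simp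
  qed
  ultimately show ?thesis by blast
qed

end
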